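(* Let $f_0\in\mathbb{R}$, $g\in\mathbb{R}^n$, $H$ a symmetric $n\times n$ matrix, $\sigma>0$, and $m(s)=f_0+\langle g,s\rangle+\frac12\langle Hs,s\rangle+\frac16\sigma\|s\|^3$. Let $s_k\in\mathbb{R}^n$ with $m(s_k)\le m(0)$, set $g_k=g+Hs_k$, and assume $\|g_k\|_{r,1}<\frac12\sigma\|s_k\|^2$. Let $\alpha_k^R$ be a minimizer of $\alpha\mapsto m(s_k-\alpha s_k)$ over $\alpha\ge0$ and $s_k^R=(1-\alpha_k^R)s_k$. Then $$m(s_k)-m(s_k^R)\ge\frac12\min\left[\frac{\big|\|g_k\|_{r,1}-\frac12\sigma\|s_k\|^2\big|^2}{1+\frac32(\|H\|_{r,2}+\sigma\|s_k\|)},\ \frac{\big|\|g_k\|_{r,1}-\frac12\sigma\|s_k\|^2\big|^{3/2}}{3\sqrt\sigma}\right].$$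
   Context: $\|\cdot\|$ is an arbitrary (possibly non-smooth) norm on $\mathbb{R}^n$, $\langle\cdot,\cdot\rangle$ the Euclidean inner product, $\|v\|_{r,1}=\max_{\|s\|=1}|\langle v,s\rangle|$ the dual norm, and for a symmetric matrix $H$, $\|H\|_{r,2}=\max_{\|v\|=1}|\langle Hv,v\rangle|$. *)

theory Defs
  imports "HOL-Analysis.Analysis"
begin

definition is_norm :: "(real^'n \<Rightarrow> real) \<Rightarrow> bool" where
  "is_norm N \<longleftrightarrow> (\<forall>x. 0 \<le> N x) \<and> (\<forall>x. N x = 0 \<longleftrightarrow> x = 0)
     \<and> (\<forall>c x. N (c *\<^sub>R x) = \<bar>c\<bar> * N x) \<and> (\<forall>x y. N (x + y) \<le> N x + N y)"

definition dual_norm :: "(real^'n \<Rightarrow> real) \<Rightarrow> real^'n \<Rightarrow> real" where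
  "dual_norm N v = Sup {\<bar>v \<bullet> s\<bar> | s. N s = 1}"

definition mat_norm :: "(real^'n \<Rightarrow> real) \<Rightarrow> real^'n^'n \<Rightarrow> real" where
  "mat_norm N H = Sup {\<bar>(H *v v) \<bullet> v\<bar> | v. N v = 1}"

definition cubic_model :: "(real^'n \<Rightarrow> real) \<Rightarrow> real \<Rightarrow> real^'n \<Rightarrow> real^'n^'n \<Rightarrow> real \<Rightarrow> real^'n \<Rightarrow> real" where
  "cubic_model N f0 g H \<sigma> s = f0 + g \<bullet> s + (1/2) * ((H *v s) \<bullet> s) + (1/6) * \<sigma> * (N s)^3"

end

theory Submission
  imports Defs
begin

lemma norm_sum_N:
  assumes "is_norm N" "finite A"
  shows "N (sum f A) \<le> (\<Sum>i\<in>A. N (f i))"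
  using assms(2)
proof (induction A rule: finite_induct)
  case empty
  have "N 0 = 0" using assms(1) unfolding is_norm_def by auto
  then show ?case by simp
next
  case (insert x F)
  have "N (f x + sum f F) \<le> N (f x) + N (sum f F)" using assms(1) unfolding is_norm_def by blast
  then show ?case using insert by simp
qed

lemma N_upper:
  fixes N :: "real^'n \<Rightarrow> real"
  assumes "is_norm N"
  shows "N x \<le> (\<Sum>i\<in>UNIV. N (axis i 1)) * norm x"
proof -
  have "x = (\<Sum>i\<in>UNIV. x$i *\<^sub>R axis i 1)"
    using basis_expansion[of x] by (simp add: scalar_mult_eq_scaleR)
  then have "N x \<le> (\<Sum>i\<in>UNIV. N (x$i *\<^sub>R axis i 1))"
    using norm_sum_N[OF assms, of UNIV "\<lambda>i. x$i *\<^sub>R axis i 1"] by simp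
  also have "\<dots> = (\<Sum>i\<in>UNIV. \<bar>x$i\<bar> * N (axis i 1))"
    using assms unfolding is_norm_def by simp
  also have "\<dots> \<le> (\<Sum>i\<in>UNIV. norm x * N (axis i 1))"
    apply (rule sum_mono) apply (rule mult_right_mono)
    using component_le_norm_cart assms unfolding is_norm_def by auto
  finally show ?thesis by (simp add: sum_distrib_left mult.commute)
qed

lemma N_lower:
  fixes N :: "real^'n \<Rightarrow> real"
  assumes hN: "is_norm N"
  obtains c where "c > 0" "\<And>x. c * norm x \<le> N x"
proof -
  define K where "K = (\<Sum>i\<in>UNIV. N (axis i (1::real)))"
  have K0: "K \<ge> 0" unfolding K_def using hN unfolding is_norm_def by (simp add: sum_nonneg)
  have lip: "K-lipschitz_on UNIV N"
  proof (rule lipschitz_onI)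
    fix x y :: "real^'n"
    have t1: "N x \<le> N y + N (x - y)" using hN unfolding is_norm_def
      by (metis add.commute diff_add_cancel)
    have t2: "N y \<le> N x + N (y - x)" using hN unfolding is_norm_def
      by (metis add.commute diff_add_cancel)
    have s: "N (y - x) = N (x - y)" using hN unfolding is_norm_def
      by (metis abs_minus_cancel abs_one minus_diff_eq mult_1 scaleR_minus1_left)
    have "N (x - y) \<le> K * norm (x - y)" using N_upper[OF hN] K_def by simp
    then show "dist (N x) (N y) \<le> K * dist x y"
      using t1 t2 s by (simp add: dist_real_def dist_norm abs_le_iff)
  qed (rule K0)
  have cont: "continuous_on (sphere 0 1) N"
    using lipschitz_on_continuous_on[OF lip] continuous_on_subset by blast
  obtain i :: 'n where True by simp
  have ne: "sphere (0::real^'n) 1 \<noteq> {}"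
    using norm_axis_1[of i] by (metis dist_0_norm empty_iff mem_sphere)
  obtain x0 where x0: "x0 \<in> sphere 0 1" "\<And>y. y \<in> sphere 0 1 \<Longrightarrow> N x0 \<le> N y"
    using continuous_attains_inf[OF compact_sphere ne cont] by blast
  have "x0 \<noteq> 0" using x0(1) by auto
  then have c0: "N x0 > 0" using hN unfolding is_norm_def by (metis less_eq_real_def)
  show ?thesis
  proof (rule that[OF c0])
    fix x :: "real^'n"
    show "N x0 * norm x \<le> N x"
    proof (cases "x = 0")
      case True then show ?thesis using hN unfolding is_norm_def by simp
    next
      case False
      have "inverse (norm x) *\<^sub>R x \<in> sphere 0 1" using False by simp
      then have "N x0 \<le> N (inverse (norm x) *\<^sub>R x)" using x0(2) by blast
      also have "\<dots> = N x / norm x" using hN unfolding is_norm_def by (simp add: field_simps)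
      finally show ?thesis using False by (simp add: field_simps)
    qed
  qed
qed


lemma decrease_formula:
  fixes t a b q r f0 :: real
  assumes "0 \<le> t"
  shows "(f0 + a + 1/2 * b + 1/6*q*r^3) - (f0 + t*a + t^2/2*b + 1/6*q*(t*r)^3)
     = (1-t)*(a + b + q*r^3/2) - (1-t)^2/2*(b + q*r^3) + q*r^3*(1-t)^3/6"
  by (simp add: field_simps power2_eq_square power3_eq_cube)

theorem lemma5p3:
  fixes N :: "real^'n \<Rightarrow> real" and f0 :: real and g :: "real^'n" and H :: "real^'n^'n"
    and \<sigma> :: real and sk :: "real^'n" and \<alpha> :: real
  defines "m \<equiv> cubic_model N f0 g H \<sigma>"
  defines "gk \<equiv> g + H *v sk"
  assumes hN: "is_norm N"
    and hH: "transpose H = H"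
    and h\<sigma>: "\<sigma> > 0"
    and hdec: "m sk \<le> m 0"
    and hg: "dual_norm N gk < (1/2) * \<sigma> * (N sk)^2"
    and h\<alpha>: "\<alpha> \<ge> 0"
    and hmin: "\<forall>\<beta>\<ge>0. m (sk - \<alpha> *\<^sub>R sk) \<le> m (sk - \<beta> *\<^sub>R sk)"
  shows "m sk - m ((1 - \<alpha>) *\<^sub>R sk) \<ge>
    (1/2) * min
      ((\<bar>dual_norm N gk - (1/2) * \<sigma> * (N sk)^2\<bar>)^2 / (1 + (3/2) * (mat_norm N H + \<sigma> * N sk)))
      ((\<bar>dual_norm N gk - (1/2) * \<sigma> * (N sk)^2\<bar>) powr (3/2) / (3 * sqrt \<sigma>))"
proof -
  have Nnn: "\<And>x. 0 \<le> N x" and N0: "\<And>x. N x = 0 \<longleftrightarrow> x = 0"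
    and Nsc: "\<And>c x. N (c *\<^sub>R x) = \<bar>c\<bar> * N x" using hN unfolding is_norm_def by auto
  obtain c where c: "c > 0" "\<And>x. c * norm x \<le> N x" using N_lower[OF hN] by blast
  have unitb: "norm s \<le> 1/c" if "N s = 1" for s
    using c(2)[of s] c(1) that by (simp add: field_simps)
  define D where "D = dual_norm N gk"
  define M where "M = mat_norm N H"
  define r where "r = N sk"
  have bddD: "bdd_above {\<bar>gk \<bullet> s\<bar> | s. N s = 1}"
  proof (rule bdd_aboveI[of _ "norm gk / c"])
    fix x assume "x \<in> {\<bar>gk \<bullet> s\<bar> | s. N s = 1}"
    then obtain s where s: "x = \<bar>gk \<bullet> s\<bar>" "N s = 1" by blast
    have "\<bar>gk \<bullet> s\<bar> \<le> norm gk * norm s" by (rule Cauchy_Schwarz_ineq2)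
    also have "\<dots> \<le> norm gk * (1/c)" by (rule mult_left_mono[OF unitb[OF s(2)]]) simp
    finally show "x \<le> norm gk / c" using s by simp
  qed
  obtain B where B: "B > 0" "\<And>x. norm (H *v x) \<le> norm x * B"
    using bounded_linear.pos_bounded[OF matrix_vector_mul_bounded_linear[of H]] by blast
  have bddM: "bdd_above {\<bar>(H *v v) \<bullet> v\<bar> | v. N v = 1}"
  proof (rule bdd_aboveI[of _ "B / c / c"])
    fix x assume "x \<in> {\<bar>(H *v v) \<bullet> v\<bar> | v. N v = 1}"
    then obtain v where v: "x = \<bar>(H *v v) \<bullet> v\<bar>" "N v = 1" by blast
    have nv: "norm v \<le> 1/c" using unitb[OF v(2)] .
    have "\<bar>(H *v v) \<bullet> v\<bar> \<le> norm (H *v v) * norm v" by (rule Cauchy_Schwarz_ineq2)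
    also have "\<dots> \<le> (norm v * B) * norm v" by (rule mult_right_mono[OF B(2)]) simp
    also have "\<dots> \<le> ((1/c) * B) * (1/c)"
      using nv B(1) c(1) by (intro mult_mono) auto
    finally show "x \<le> B / c / c" using v by simp
  qed
  obtain i :: 'n where True by simp
  define e :: "real^'n" where "e = inverse (N (axis i (1::real))) *\<^sub>R axis i 1"
  have "N (axis i (1::real)) \<noteq> 0" using N0 by (metis axis_eq_0_iff zero_neq_one)
  then have e1: "N e = 1" unfolding e_def using Nnn by (simp add: Nsc)
  have D0: "D \<ge> 0"
  proof -
    have "\<bar>gk \<bullet> e\<bar> \<le> D" unfolding D_def dual_norm_def
      by (rule cSup_upper[OF _ bddD]) (use e1 in blast)
    then show ?thesis by linarith
  qed
  have M0: "M \<ge> 0"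
  proof -
    have "\<bar>(H *v e) \<bullet> e\<bar> \<le> M" unfolding M_def mat_norm_def
      by (rule cSup_upper[OF _ bddM]) (use e1 in blast)
    then show ?thesis by linarith
  qed
  have r0: "r > 0"
  proof (rule ccontr)
    assume "\<not> r > 0"
    then have "r = 0" using Nnn[of sk] r_def by linarith
    then show False using hg D0 unfolding D_def r_def by simp
  qed
  define u where "u = inverse r *\<^sub>R sk"
  have u1: "N u = 1" unfolding u_def using r0 by (simp add: Nsc r_def[symmetric])
  have "\<bar>gk \<bullet> u\<bar> \<le> D" unfolding D_def dual_norm_def
    by (rule cSup_upper[OF _ bddD]) (use u1 in blast)
  then have "\<bar>gk \<bullet> sk\<bar> / r \<le> D" unfolding u_def using r0 by (simp add: abs_mult divide_inverse mult.commute)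
  then have gks: "\<bar>gk \<bullet> sk\<bar> \<le> D * r" using r0 by (simp add: field_simps)
  have "\<bar>(H *v u) \<bullet> u\<bar> \<le> M" unfolding M_def mat_norm_def
    by (rule cSup_upper[OF _ bddM]) (use u1 in blast)
  then have "\<bar>(H *v sk) \<bullet> sk\<bar> / r^2 \<le> M" unfolding u_def using r0
    by (simp add: abs_mult matrix_vector_mult_scaleR power2_eq_square divide_inverse mult.commute)
  then have bM: "(H *v sk) \<bullet> sk \<le> M * r^2" using r0 by (simp add: field_simps)
  define a where "a = g \<bullet> sk"
  define b where "b = (H *v sk) \<bullet> sk"
  have ab: "a + b = gk \<bullet> sk" unfolding a_def b_def gk_def by (simp add: inner_add_left)
  have mt: "m (t *\<^sub>R sk) = f0 + t*a + t^2/2*b + 1/6*\<sigma>*(t*r)^3" if "t \<ge> 0" for t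
    unfolding m_def cubic_model_def a_def b_def r_def using that
    by (simp add: Nsc matrix_vector_mult_scaleR power2_eq_square)
  have m1: "m sk = f0 + a + 1/2*b + 1/6*\<sigma>*r^3" using mt[of 1] by simp
  define cc where "cc = a + b + \<sigma>*r^3/2"
  define L where "L = r^2 * (M + \<sigma>*r)"
  define \<delta> where "\<delta> = \<sigma>*r^2/2 - D"
  have \<delta>0: "\<delta> > 0" using hg unfolding \<delta>_def D_def r_def by simp
  have ccd: "cc \<ge> r * \<delta>" unfolding cc_def \<delta>_def using ab gks
    by (simp add: field_simps power2_eq_square power3_eq_cube)
  have L0: "L > 0" unfolding L_def using r0 M0 h\<sigma> by (simp add: add_nonneg_pos)
  have bL: "b + \<sigma>*r^3 \<le> L" unfolding L_def b_def using bM
    by (simp add: field_simps power2_eq_square power3_eq_cube)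
  have dec: "m sk - m ((1-\<beta>) *\<^sub>R sk) \<ge> \<beta>*cc - \<beta>^2/2*L" if "0 \<le> \<beta>" "\<beta> \<le> 1" for \<beta>
  proof -
    have "m sk - m ((1-\<beta>) *\<^sub>R sk) = \<beta>*cc - \<beta>^2/2*(b + \<sigma>*r^3) + \<sigma>*r^3*\<beta>^3/6"
      using that decrease_formula[of "1-\<beta>" f0 a b \<sigma> r] m1 mt[of "1-\<beta>"]
      unfolding cc_def by simp
    moreover have "\<sigma>*r^3*\<beta>^3/6 \<ge> 0" using h\<sigma> r0 that by simp
    moreover have "\<beta>^2/2*(b + \<sigma>*r^3) \<le> \<beta>^2/2*L" using bL by (simp add: mult_left_mono)
    ultimately show ?thesis by linarith
  qed
  have mina: "m ((1-\<alpha>) *\<^sub>R sk) \<le> m ((1-\<beta>) *\<^sub>R sk)" if "0 \<le> \<beta>" for \<beta>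
    using hmin that by (simp add: algebra_simps)
  have absd: "\<bar>dual_norm N gk - (1/2) * \<sigma> * (N sk)^2\<bar> = \<delta>"
    using \<delta>0 unfolding \<delta>_def D_def r_def by simp
  define A1 where "A1 = \<delta>^2 / (1 + (3/2) * (M + \<sigma> * r))"
  define A2 where "A2 = \<delta> powr (3/2) / (3 * sqrt \<sigma>)"
  have goal: "m sk - m ((1 - \<alpha>) *\<^sub>R sk) \<ge> (1/2) * min A1 A2"
  proof (cases "cc \<le> L")
    case True
    define \<beta> where "\<beta> = cc / L"
    have b0: "0 \<le> \<beta>" "\<beta> \<le> 1" unfolding \<beta>_def using True L0 ccd r0 \<delta>0
      by (auto simp: field_simps intro!: order_trans[OF _ ccd])
    have "\<beta>*cc - \<beta>^2/2*L = cc^2/(2*L)" unfolding \<beta>_def using L0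
      by (simp add: field_simps power2_eq_square)
    also have "cc^2/(2*L) \<ge> (r*\<delta>)^2/(2*L)"
      using ccd r0 \<delta>0 L0 by (intro divide_right_mono power_mono) auto
    moreover have "(r*\<delta>)^2/(2*L) = \<delta>^2/(2*(M+\<sigma>*r))"
    proof -
      have "(r*\<delta>)^2/(2*L) = (r^2*\<delta>^2)/(r^2*(2*(M+\<sigma>*r)))"
        unfolding L_def by (simp add: power_mult_distrib mult.assoc mult.left_commute)
      also have "\<dots> = \<delta>^2/(2*(M+\<sigma>*r))" using r0 by simp
      finally show ?thesis .
    qed
    moreover have "\<delta>^2/(2*(M+\<sigma>*r)) \<ge> (1/2)*A1"
    proof -
      have X0: "0 < M+\<sigma>*r" using M0 h\<sigma> r0 by (simp add: add_nonneg_pos)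
      have "(1/2)*(\<delta>^2 / (1 + (3/2) * (M + \<sigma> * r))) = \<delta>^2/(2+3*(M+\<sigma>*r))"
        by (simp add: field_simps)
      also have "\<dots> \<le> \<delta>^2/(2*(M+\<sigma>*r))"
        by (rule frac_le) (use X0 in auto)
      finally show ?thesis unfolding A1_def .
    qed
    ultimately have "\<beta>*cc - \<beta>^2/2*L \<ge> (1/2)*min A1 A2"
      using min.cobounded1[of A1 A2] by linarith
    then show ?thesis using dec[OF b0] mina[OF b0(1)] by linarith
  next
    case False
    have "1*cc - 1^2/2*L \<ge> r*\<delta>/2" using False ccd by simp
    moreover have "A2 \<le> r*\<delta>"
    proof -
      have p: "\<delta> powr (3/2) = \<delta> * sqrt \<delta>"
        using \<delta>0 powr_add[of \<delta> 1 "1/2"] powr_half_sqrt[of \<delta>] by simp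
      have sr: "\<sigma>*r^2 \<ge> 0" using h\<sigma> by simp
      have "\<delta> \<le> \<sigma>*r^2" unfolding \<delta>_def using D0 sr by linarith
      then have "sqrt \<delta> \<le> sqrt (\<sigma>*r^2)" by (rule real_sqrt_le_mono)
      also have "\<dots> = sqrt \<sigma> * r" using r0 by (simp add: real_sqrt_mult)
      finally have sq: "sqrt \<delta> \<le> sqrt \<sigma> * r" .
      have "\<delta> * sqrt \<delta> \<le> \<delta> * (sqrt \<sigma> * r)"
        by (rule mult_left_mono[OF sq]) (use \<delta>0 in simp)
      moreover have "0 \<le> \<delta> * (sqrt \<sigma> * r)" using \<delta>0 h\<sigma> r0 by simp
      ultimately have "\<delta> * sqrt \<delta> \<le> (3 * sqrt \<sigma>) * (r*\<delta>)" by (simp add: algebra_simps)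
      moreover have "0 < 3 * sqrt \<sigma>" using h\<sigma> by simp
      ultimately show ?thesis unfolding A2_def p by (simp add: pos_divide_le_eq mult.commute)
    qed
    ultimately have "1*cc - 1^2/2*L \<ge> (1/2)*min A1 A2" by linarith
    then show ?thesis using dec[of 1] mina[of 1] by linarith
  qed
  show ?thesis using goal absd unfolding A1_def A2_def M_def r_def by simp
qed

end
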